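(* Let $h=\hat h\circ\tilde h:\Sigma^c\to\mathcal R$ be a random tornado tabulation hash function with $d$ derived characters, query keys $Q$ and selector function $f$. Let $\mathcal I_{X^{f,h}}$ denote the event that the set of derived selected keys $\tilde h(X^{f,h})$ is linearly independent. Then for any $\delta>0$, $$\Pr\left[|X^{f,h}|\ge(1+\delta)\mu^f\ \wedge\ \mathcal I_{X^{f,h}}\right]\le\left(\frac{e^\delta}{(1+\delta)^{1+\delta}}\right)^{\mu^f}.$$
   Context: Let $\Sigma=\{0,1,\dots,2^k-1\}$, identified with $k$-bit strings, $\oplus$ bitwise xor; throughout $|\Sigma|\ge2^8$; $\mathcal R=\{0,\dots,2^r-1\}$. A simple tabulation hash function $g:\Sigma^b\to\mathcal R'$ is $g(x_1\cdots x_b)=T_1[x_1]\oplus\cdots\oplus T_b[x_b]$ with independent fully random tables $T_i:\Sigma\to\mathcal R'$. A random tornado tabulation hash function $h:\Sigma^c\to\mathcal R$ with $d\ge1$ derived characters consists of mutually independent simple tabulation functions $\tilde h_i:\Sigma^{c+i-1}\to\Sigma$ ($i=0,\dots,d$) and $\hat h:\Sigma^{c+d}\to\mathcal R$; the derived key of $x=x_1\cdots x_c$ is $\tilde h(x)=\tilde x_1\cdots\tilde x_{c+d}$ with $\tilde x_i=x_i$ ($i<c$), $\tilde x_c=x_c\oplus\tilde h_0(\tilde x_1\cdots\tilde x_{c-1})$, $\tilde x_i=\tilde h_{i-c}(\tilde x_1\cdots\tilde x_{i-1})$ ($c<i\le c+d$); $h(x)=\hat h(\tilde h(x))$. A selector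 function with query keys $Q\subseteq\Sigma^c$ is $f:\Sigma^c\times\mathcal R\times\mathcal R^Q\to\{0,1\}$ with $f(q,\cdot,\cdot)=1$ for $q\in Q$; $X^{f,h}=\{x\in\Sigma^c: f(x,h(x),h|_Q)=1\}$; $p^f_x=\max_{\varphi\in\mathcal R^Q}\Pr_{r\sim\mathcal U(\mathcal R)}[f(x,r,\varphi)=1]$; $\mu^f=\sum_{x\in\Sigma^c}p^f_x$. A set $Y\subseteq\Sigma^b$ is linearly dependent if some nonempty $Y'\subseteq Y$ has, at every position, every character appearing an even number of times among the keys of $Y'$; otherwise linearly independent. *)

theory Defs
  imports "HOL-Probability.Probability"
begin

text \<open>Characters: Sigma = {0..<2^k} (k-bit strings as naturals, xor = bitwise xor on nat).
 A key in Sigma^b is a list of length b over Sigma.\<close>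

definition keys :: "nat \<Rightarrow> nat \<Rightarrow> nat list set" where
  "keys k b = {xs. length xs = b \<and> set xs \<subseteq> {..<2^k}}"

text \<open>Table family for a simple tabulation function Sigma^b -> {0..<2^v}:
 T j a is the entry of table T_(j+1) at character a (j < b, a < 2^k); zero elsewhere
 (canonical representative, so that the set of tables is finite).\<close>

definition tables :: "nat \<Rightarrow> nat \<Rightarrow> nat \<Rightarrow> (nat \<Rightarrow> nat \<Rightarrow> nat) set" where
  "tables k b v = {T. \<forall>j a. (j < b \<and> a < 2^k \<longrightarrow> T j a < 2^v)
                          \<and> (\<not> (j < b \<and> a < 2^k) \<longrightarrow> T j a = 0)}"

definition stab :: "(nat \<Rightarrow> nat \<Rightarrow> nat) \<Rightarrow> nat list \<Rightarrow> nat" where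
  "stab T xs = fold (\<lambda>j acc. Bit_Operations.xor acc (T j (xs ! j))) [0..<length xs] 0"

text \<open>Tornado tables: Tt i is the table family of h~_i : Sigma^(c+i-1) -> Sigma, i = 0..d.\<close>

definition tornado_tables :: "nat \<Rightarrow> nat \<Rightarrow> nat \<Rightarrow> (nat \<Rightarrow> nat \<Rightarrow> nat \<Rightarrow> nat) set" where
  "tornado_tables k c d = {Tt. (\<forall>i\<le>d. Tt i \<in> tables k (c + i - 1) k)
                              \<and> (\<forall>i>d. Tt i = (\<lambda>_ _. 0))}"

definition derived_base :: "(nat \<Rightarrow> nat \<Rightarrow> nat \<Rightarrow> nat) \<Rightarrow> nat \<Rightarrow> nat list \<Rightarrow> nat list" where
  "derived_base Tt c x = take (c - 1) x @ [Bit_Operations.xor (x ! (c - 1)) (stab (Tt 0) (take (c - 1) x))]"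

fun derived_ext :: "(nat \<Rightarrow> nat \<Rightarrow> nat \<Rightarrow> nat) \<Rightarrow> nat \<Rightarrow> nat list \<Rightarrow> nat list" where
  "derived_ext Tt 0 ys = ys"
| "derived_ext Tt (Suc i) ys = (let zs = derived_ext Tt i ys in zs @ [stab (Tt (Suc i)) zs])"

definition derived_key :: "(nat \<Rightarrow> nat \<Rightarrow> nat \<Rightarrow> nat) \<Rightarrow> nat \<Rightarrow> nat \<Rightarrow> nat list \<Rightarrow> nat list" where
  "derived_key Tt c d x = derived_ext Tt d (derived_base Tt c x)"

definition tornado :: "(nat \<Rightarrow> nat \<Rightarrow> nat \<Rightarrow> nat) \<Rightarrow> (nat \<Rightarrow> nat \<Rightarrow> nat) \<Rightarrow> nat \<Rightarrow> nat \<Rightarrow> nat list \<Rightarrow> nat" where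
  "tornado Tt Th c d x = stab Th (derived_key Tt c d x)"

text \<open>Restriction of h to the query keys, as element of R^Q (canonically 0 outside Q).\<close>

definition restrictQ :: "(nat list \<Rightarrow> nat) \<Rightarrow> nat list set \<Rightarrow> nat list \<Rightarrow> nat" where
  "restrictQ g Q = (\<lambda>q. if q \<in> Q then g q else 0)"

text \<open>R^Q as canonical functions.\<close>

definition RQ :: "nat \<Rightarrow> nat list set \<Rightarrow> (nat list \<Rightarrow> nat) set" where
  "RQ r Q = {\<phi>. (\<forall>q\<in>Q. \<phi> q < 2^r) \<and> (\<forall>q. q \<notin> Q \<longrightarrow> \<phi> q = 0)}"

definition selected ::
  "nat \<Rightarrow> nat \<Rightarrow> nat list set \<Rightarrow> (nat list \<Rightarrow> nat \<Rightarrow> (nat list \<Rightarrow> nat) \<Rightarrow> bool) \<Rightarrow> (nat list \<Rightarrow> nat) \<Rightarrow> nat list set" where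
  "selected k c Q f g = {x \<in> keys k c. f x (g x) (restrictQ g Q)}"

definition p_sel ::
  "nat \<Rightarrow> nat list set \<Rightarrow> (nat list \<Rightarrow> nat \<Rightarrow> (nat list \<Rightarrow> nat) \<Rightarrow> bool) \<Rightarrow> nat list \<Rightarrow> real" where
  "p_sel r Q f x = Max ((\<lambda>\<phi>. measure_pmf.prob (pmf_of_set {..<(2::nat)^r}) {v. f x v \<phi>}) ` RQ r Q)"

definition mu_sel ::
  "nat \<Rightarrow> nat \<Rightarrow> nat \<Rightarrow> nat list set \<Rightarrow> (nat list \<Rightarrow> nat \<Rightarrow> (nat list \<Rightarrow> nat) \<Rightarrow> bool) \<Rightarrow> real" where
  "mu_sel k c r Q f = (\<Sum>x\<in>keys k c. p_sel r Q f x)"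

definition lin_dependent :: "nat \<Rightarrow> nat list set \<Rightarrow> bool" where
  "lin_dependent b Y = (\<exists>Y'. Y' \<subseteq> Y \<and> Y' \<noteq> {} \<and> finite Y' \<and>
       (\<forall>j<b. \<forall>a. even (card {y \<in> Y'. y ! j = a})))"

definition lin_independent :: "nat \<Rightarrow> nat list set \<Rightarrow> bool" where
  "lin_independent b Y = (\<not> lin_dependent b Y)"

end

theory Submission
  imports Defs "HOL-Probability.Probability"
begin


primrec stabn :: "(nat \<Rightarrow> nat \<Rightarrow> nat) \<Rightarrow> nat list \<Rightarrow> nat \<Rightarrow> nat" where
  "stabn T xs 0 = 0"
| "stabn T xs (Suc n) = Bit_Operations.xor (stabn T xs n) (T n (xs ! n))"

lemma fold_stabn: "fold (\<lambda>j acc. Bit_Operations.xor acc (T j (xs ! j))) [0..<n] 0 = stabn T xs n"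
  by (induction n) auto

lemma stab_stabn: "stab T xs = stabn T xs (length xs)"
  unfolding stab_def by (rule fold_stabn)

lemma xor_lt_pow: "(a::nat) < 2^r \<Longrightarrow> b < 2^r \<Longrightarrow> Bit_Operations.xor a b < 2^r"
  by (metis take_bit_nat_eq_self_iff take_bit_xor)

lemma stabn_lt: "(\<And>j a. T j a < 2^r) \<Longrightarrow> stabn T xs n < 2^r"
  by (induction n) (auto intro: xor_lt_pow)

lemma tables_lt: "T \<in> tables k b v \<Longrightarrow> T j a < 2^v"
  unfolding tables_def by (cases "j < b \<and> a < 2^k") auto

lemma stab_lt: "T \<in> tables k b v \<Longrightarrow> stab T xs < 2^v"
  unfolding stab_stabn by (rule stabn_lt) (rule tables_lt)

lemma stabn_xor: "stabn (\<lambda>j a. Bit_Operations.xor (T j a) (T' j a)) xs n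
   = Bit_Operations.xor (stabn T xs n) (stabn T' xs n)"
  by (induction n) (auto simp: ac_simps)

lemma stab_xor: "stab (\<lambda>j a. Bit_Operations.xor (T j a) (T' j a)) xs
   = Bit_Operations.xor (stab T xs) (stab T' xs)"
  by (simp add: stab_stabn stabn_xor)

lemma stabn_odd: "stabn (\<lambda>j a. if odd (T j a) then v else 0) xs n
   = (if odd (\<Sum>j<n. T j (xs ! j)) then v else 0)"
  by (induction n) auto



definition ev :: "nat \<Rightarrow> (nat \<Rightarrow> nat \<Rightarrow> nat) \<Rightarrow> nat list \<Rightarrow> nat" where
  "ev b T w = (\<Sum>j<b. T j (w ! j))"

lemma dep_mono: "lin_dependent b Y \<Longrightarrow> Y \<subseteq> Y2 \<Longrightarrow> lin_dependent b Y2"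
proof -
  assume "lin_dependent b Y" and s: "Y \<subseteq> Y2"
  then obtain Y' where "Y' \<subseteq> Y" "Y' \<noteq> {}" "finite Y'" "\<forall>j<b. \<forall>a. even (card {y \<in> Y'. y ! j = a})"
    unfolding lin_dependent_def by blast
  moreover have "Y' \<subseteq> Y2" using calculation(1) s by (rule subset_trans)
  ultimately show ?thesis unfolding lin_dependent_def by blast
qed

lemma ev_lin: "finite A \<Longrightarrow> ev b (\<lambda>j a. V j a + (\<Sum>i\<in>A. c i * Tf i j a)) w
   = ev b V w + (\<Sum>i\<in>A. c i * ev b (Tf i) w)"
  unfolding ev_def by (simp add: sum.distrib sum_distrib_left sum.swap[of _ A])

lemma ev_lin2: "ev b (\<lambda>j a. V j a + c * U j a) w = ev b V w + c * ev b U w"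
  unfolding ev_def by (simp add: sum.distrib sum_distrib_left)

lemma ev_unit: "j0 < b \<Longrightarrow> ev b (\<lambda>j a. if j = j0 \<and> a = a0 then 1 else 0) w = (if w ! j0 = a0 then 1 else 0)"
  unfolding ev_def
  by (subst sum.remove[of _ j0]) auto

lemma duality:
  assumes "finite W" "\<not> lin_dependent b W"
  shows "\<forall>w0\<in>W. \<exists>T. \<forall>w\<in>W. (odd (ev b T w) \<longleftrightarrow> w = w0)"
  using assms
proof (induction W rule: finite_induct)
  case empty
  then show ?case by simp
next
  case (insert w1 W')
  have ndep: "\<not> lin_dependent b W'" using insert.prems dep_mono by blast
  obtain Tf where Tf0: "\<forall>w0\<in>W'. \<forall>w\<in>W'. odd (ev b (Tf w0) w) \<longleftrightarrow> w = w0"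
    using bchoice[OF insert.IH[OF ndep]] by blast
  then have Tf: "\<And>w0 w. w0 \<in> W' \<Longrightarrow> w \<in> W' \<Longrightarrow> odd (ev b (Tf w0) w) \<longleftrightarrow> w = w0"
    by blast
  have claim: "\<exists>U. (\<forall>w\<in>W'. even (ev b U w)) \<and> odd (ev b U w1)"
  proof (rule ccontr)
    assume H: "\<not> ?thesis"
    define S where "S = {w0\<in>W'. odd (ev b (Tf w0) w1)}"
    have "\<forall>j<b. \<forall>a. even (card {y \<in> insert w1 S. y ! j = a})"
    proof (intro allI impI)
      fix j and a :: nat assume jb: "j < b"
      define V where "V = (\<lambda>j' a'. if j' = j \<and> a' = a then 1 else (0::nat))"
      define U where "U = (\<lambda>j' a'. V j' a' + (\<Sum>w0\<in>W'. ev b V w0 * Tf w0 j' a'))"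
      have evU: "ev b U w = ev b V w + (\<Sum>w0\<in>W'. ev b V w0 * ev b (Tf w0) w)" for w
        unfolding U_def by (rule ev_lin[OF insert.hyps(1)])
      have "even (ev b U w)" if wW: "w \<in> W'" for w
      proof -
        have "{w0 \<in> W'. odd (ev b V w0 * ev b (Tf w0) w)} = {w0 \<in> W'. w0 = w \<and> odd (ev b V w0)}"
        proof (rule Collect_cong)
          fix w0 show "(w0 \<in> W' \<and> odd (ev b V w0 * ev b (Tf w0) w)) = (w0 \<in> W' \<and> w0 = w \<and> odd (ev b V w0))"
            using Tf[of w0 w, OF _ wW] by (auto simp only: even_mult_iff)
        qed
        also have "\<dots> = (if odd (ev b V w) then {w} else {})" using wW by auto
        finally have "{w0 \<in> W'. odd (ev b V w0 * ev b (Tf w0) w)} = (if odd (ev b V w) then {w} else {})" .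
        then show ?thesis unfolding evU using insert.hyps(1)
          by (simp add: even_sum_iff)
      qed
      with H have "even (ev b U w1)" by blast
      moreover have "{w0 \<in> W'. odd (ev b V w0 * ev b (Tf w0) w1)} = {y\<in>S. y ! j = a}"
      proof -
        have evV: "ev b V w = (if w ! j = a then 1 else 0)" for w unfolding V_def by (rule ev_unit[OF jb])
        show ?thesis unfolding S_def evV by (auto simp only: even_mult_iff split: if_splits)
      qed
      ultimately have "even (ev b V w1 + card {y\<in>S. y ! j = a})"
        unfolding evU using insert.hyps(1) by (simp add: even_sum_iff)
      moreover have "ev b V w1 = (if w1 ! j = a then 1 else 0)" unfolding V_def by (rule ev_unit[OF jb])
      moreover have "finite S" using insert.hyps(1) S_def by simp
      moreover have "w1 \<notin> S" using insert.hyps(2) S_def by auto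
      ultimately have "even (ev b V w1 + card {y\<in>S. y ! j = a})" "ev b V w1 = (if w1 ! j = a then 1 else 0)" "finite S" "w1 \<notin> S" by auto
      then show "even (card {y \<in> insert w1 S. y ! j = a})"
      proof -
        have e: "{y \<in> insert w1 S. y ! j = a} = (if w1 ! j = a then insert w1 {y\<in>S. y ! j = a} else {y\<in>S. y ! j = a})"
          by auto
        show ?thesis using \<open>finite S\<close> \<open>w1 \<notin> S\<close> \<open>even (ev b V w1 + card {y\<in>S. y ! j = a})\<close>
            \<open>ev b V w1 = (if w1 ! j = a then 1 else 0)\<close>
          unfolding e by (cases "w1 ! j = a") auto
      qed
    qed
    moreover have "finite S" using insert.hyps(1) S_def by simp
    moreover have "insert w1 S \<subseteq> insert w1 W'" using S_def by auto
    ultimately have "lin_dependent b (insert w1 W')"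
      unfolding lin_dependent_def by (intro exI[of _ "insert w1 S"]) auto
    with insert.prems show False by blast
  qed
  then obtain U where U: "\<And>w. w \<in> W' \<Longrightarrow> even (ev b U w)" "odd (ev b U w1)" by blast
  show ?case
  proof
    fix w0 assume w0: "w0 \<in> insert w1 W'"
    show "\<exists>T. \<forall>w\<in>insert w1 W'. odd (ev b T w) = (w = w0)"
    proof (cases "w0 = w1")
      case True
      then show ?thesis using U insert.hyps(2) by (intro exI[of _ U]) auto
    next
      case False
      then have w0W: "w0 \<in> W'" using w0 by auto
      define T where "T = (\<lambda>j a. Tf w0 j a + ev b (Tf w0) w1 * U j a)"
      have evT: "ev b T w = ev b (Tf w0) w + ev b (Tf w0) w1 * ev b U w" for w
        unfolding T_def by (rule ev_lin2)
      show ?thesis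
      proof (intro exI[of _ T] ballI)
        fix w assume "w \<in> insert w1 W'"
        then show "odd (ev b T w) = (w = w0)"
        proof
          assume "w = w1"
          then show ?thesis using U(2) False by (simp add: evT)
        next
          assume "w \<in> W'"
          then show ?thesis using U(1) Tf[OF w0W] by (simp add: evT)
        qed
      qed
    qed
  qed
qed



lemma finite_tables: "finite (tables k b v)"
proof -
  let ?S = "{g. \<forall>x. (x \<in> {..<b}\<times>{..<(2::nat)^k} \<longrightarrow> g x \<in> {..<(2::nat)^v}) \<and> (x \<notin> {..<b}\<times>{..<(2::nat)^k} \<longrightarrow> g x = 0)}"
  have "(\<lambda>T. case_prod T) ` tables k b v \<subseteq> ?S" unfolding tables_def by auto
  moreover have "finite ?S" by (rule finite_set_of_finite_funs) auto
  ultimately have "finite ((\<lambda>T. case_prod T) ` tables k b v)" by (rule finite_subset)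
  moreover have "inj_on (\<lambda>T. case_prod T) (tables k b v)"
    by (rule inj_on_inverseI[of _ curry]) simp
  ultimately show ?thesis by (rule finite_imageD)
qed

lemma zero_tables: "(\<lambda>_ _. 0) \<in> tables k b v"
  unfolding tables_def by auto

definition xt :: "(nat \<Rightarrow> nat \<Rightarrow> nat) \<Rightarrow> (nat \<Rightarrow> nat \<Rightarrow> nat) \<Rightarrow> (nat \<Rightarrow> nat \<Rightarrow> nat)" where
  "xt T T' = (\<lambda>j a. Bit_Operations.xor (T j a) (T' j a))"

lemma xt_tables: "T \<in> tables k b v \<Longrightarrow> T' \<in> tables k b v \<Longrightarrow> xt T T' \<in> tables k b v"
  unfolding tables_def xt_def by (auto intro: xor_lt_pow)

lemma stab_xt: "stab (xt T T') w = Bit_Operations.xor (stab T w) (stab T' w)"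
  unfolding xt_def by (rule stab_xor)

lemma xt_cancel: "xt (xt T T') T' = T"
  unfolding xt_def by (simp add: xor.assoc)

lemma stab_zero: "stab (\<lambda>_ _. 0) w = 0"
proof -
  have "stabn (\<lambda>_ _. 0) w n = 0" for n by (induction n) auto
  then show ?thesis by (simp add: stab_stabn)
qed

lemma surj_tab:
  assumes W: "finite W" "W \<subseteq> keys k b" "\<not> lin_dependent b W"
    and psi: "\<And>w. w \<in> W \<Longrightarrow> \<psi> w < 2^r"
  shows "\<exists>Th\<in>tables k b r. \<forall>w\<in>W. stab Th w = \<psi> w"
proof -
  obtain Tf where Tf: "\<forall>w0\<in>W. \<forall>w\<in>W. odd (ev b (Tf w0) w) \<longleftrightarrow> w = w0"
    using bchoice[OF duality[OF W(1) W(3)]] by blast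
  define T' where "T' w0 = (\<lambda>j a. if j < b \<and> a < 2^k then Tf w0 j a else 0)" for w0
  define S where "S w0 = (\<lambda>j a. if odd (T' w0 j a) then \<psi> w0 else 0)" for w0
  have S_tab: "S w0 \<in> tables k b r" if "w0 \<in> W" for w0
    using psi[OF that] unfolding tables_def S_def T'_def by auto
  have S_stab: "stab (S w0) w = (if w = w0 then \<psi> w0 else 0)" if "w0 \<in> W" "w \<in> W" for w0 w
  proof -
    have wk: "length w = b" "\<And>j. j < b \<Longrightarrow> w ! j < 2^k"
      using that(2) W(2) unfolding keys_def by (auto simp: subset_iff)
    have "(\<Sum>j<length w. T' w0 j (w ! j)) = ev b (Tf w0) w"
      unfolding ev_def T'_def wk(1) using wk(2) by (intro sum.cong) auto
    moreover have "odd (ev b (Tf w0) w) \<longleftrightarrow> w = w0" using Tf that by blast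
    ultimately show ?thesis unfolding S_def stab_stabn stabn_odd by simp
  qed
  have "\<exists>Th\<in>tables k b r. \<forall>w\<in>W. stab Th w = (if w \<in> V then \<psi> w else 0)" if "V \<subseteq> W" for V
  proof -
    have "finite V" using that W(1) finite_subset by blast
    then show ?thesis using that
    proof (induction V rule: finite_induct)
      case empty
      show ?case by (intro bexI[OF _ zero_tables]) (simp add: stab_zero)
    next
      case (insert a F)
      then obtain Th where Th: "Th \<in> tables k b r" "\<forall>w\<in>W. stab Th w = (if w \<in> F then \<psi> w else 0)"
        by auto
      have aW: "a \<in> W" using insert.prems by auto
      show ?case
      proof (intro bexI[of _ "xt Th (S a)"] ballI)
        show "xt Th (S a) \<in> tables k b r" using xt_tables Th(1) S_tab[OF aW] by blast
        fix w assume wW: "w \<in> W"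
        show "stab (xt Th (S a)) w = (if w \<in> insert a F then \<psi> w else 0)"
        proof -
          have "stab Th w = (if w \<in> F then \<psi> w else 0)" using Th(2) wW by blast
          moreover have "stab (S a) w = (if w = a then \<psi> a else 0)" using S_stab[OF aW wW] .
          ultimately show ?thesis unfolding stab_xt using insert.hyps(2)
            by (cases "w = a"; cases "w \<in> F") simp_all
        qed
      qed
    qed
  qed
  from this[of W] show ?thesis by simp
qed

definition fib :: "nat \<Rightarrow> nat \<Rightarrow> nat \<Rightarrow> nat list set \<Rightarrow> (nat list \<Rightarrow> nat) \<Rightarrow> (nat \<Rightarrow> nat \<Rightarrow> nat) set" where
  "fib k b r W \<psi> = {Th \<in> tables k b r. \<forall>w\<in>W. stab Th w = \<psi> w}"

lemma fib_card_eq: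
  assumes W: "finite W" "W \<subseteq> keys k b" "\<not> lin_dependent b W"
    and psi: "\<And>w. w \<in> W \<Longrightarrow> \<psi> w < 2^r"
  shows "card (fib k b r W \<psi>) = card (fib k b r W (\<lambda>_. 0))"
proof -
  obtain Th0 where Th0: "Th0 \<in> tables k b r" "\<forall>w\<in>W. stab Th0 w = \<psi> w"
    using surj_tab[where \<psi>=\<psi> and r=r, OF W psi] by blast
  have "inj_on (\<lambda>Th. xt Th Th0) (fib k b r W (\<lambda>_. 0))"
    by (rule inj_on_inverseI[of _ "\<lambda>Th. xt Th Th0"]) (rule xt_cancel)
  moreover have "(\<lambda>Th. xt Th Th0) ` fib k b r W (\<lambda>_. 0) = fib k b r W \<psi>"
  proof
    show "(\<lambda>Th. xt Th Th0) ` fib k b r W (\<lambda>_. 0) \<subseteq> fib k b r W \<psi>"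
      unfolding fib_def using Th0 xt_tables by (auto simp: stab_xt)
    show "fib k b r W \<psi> \<subseteq> (\<lambda>Th. xt Th Th0) ` fib k b r W (\<lambda>_. 0)"
    proof
      fix Th assume Th: "Th \<in> fib k b r W \<psi>"
      then have m: "xt Th Th0 \<in> fib k b r W (\<lambda>_. 0)"
        unfolding fib_def using Th0 xt_tables by (auto simp: stab_xt)
      have e: "Th = xt (xt Th Th0) Th0" by (simp add: xt_cancel)
      show "Th \<in> (\<lambda>Th. xt Th Th0) ` fib k b r W (\<lambda>_. 0)" by (rule image_eqI[where f="\<lambda>Th. xt Th Th0", OF e m])
    qed
  qed
  ultimately show ?thesis by (metis card_image)
qed

lemma fib_card:
  assumes W: "finite W" "W \<subseteq> keys k b" "\<not> lin_dependent b W"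
    and psi: "\<And>w. w \<in> W \<Longrightarrow> \<psi> w < 2^r"
  shows "card (fib k b r W \<psi>) * (2^r)^(card W) = card (tables k b r)"
proof -
  let ?P = "PiE W (\<lambda>_. {..<(2::nat)^r})"
  have un: "tables k b r = (\<Union>\<phi>\<in>?P. fib k b r W \<phi>)"
  proof
    show "tables k b r \<subseteq> (\<Union>\<phi>\<in>?P. fib k b r W \<phi>)"
    proof
      fix Th assume Th: "Th \<in> tables k b r"
      have "restrict (\<lambda>w. stab Th w) W \<in> ?P" using stab_lt[OF Th] by (auto simp only: restrict_PiE_iff lessThan_iff)
      moreover have "Th \<in> fib k b r W (restrict (\<lambda>w. stab Th w) W)"
        using Th unfolding fib_def by simp
      ultimately show "Th \<in> (\<Union>\<phi>\<in>?P. fib k b r W \<phi>)" by blast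
    qed
    show "(\<Union>\<phi>\<in>?P. fib k b r W \<phi>) \<subseteq> tables k b r" unfolding fib_def by auto
  qed
  have disj: "\<forall>\<phi>\<in>?P. \<forall>\<phi>'\<in>?P. \<phi> \<noteq> \<phi>' \<longrightarrow> fib k b r W \<phi> \<inter> fib k b r W \<phi>' = {}"
  proof (intro ballI impI)
    fix \<phi> \<phi>' assume "\<phi> \<in> ?P" "\<phi>' \<in> ?P" "\<phi> \<noteq> \<phi>'"
    then obtain w where "w \<in> W" "\<phi> w \<noteq> \<phi>' w"
      by (metis PiE_ext)
    then show "fib k b r W \<phi> \<inter> fib k b r W \<phi>' = {}" unfolding fib_def by auto
  qed
  have fin: "\<forall>\<phi>\<in>?P. finite (fib k b r W \<phi>)"
    unfolding fib_def using finite_tables by auto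
  have "card (tables k b r) = (\<Sum>\<phi>\<in>?P. card (fib k b r W \<phi>))"
    unfolding un by (rule card_UN_disjoint) (use W(1) fin disj in \<open>auto simp: finite_PiE\<close>)
  also have "\<dots> = (\<Sum>\<phi>\<in>?P. card (fib k b r W (\<lambda>_. 0)))"
    by (rule sum.cong) (auto intro!: fib_card_eq[OF W] simp: PiE_iff)
  also have "\<dots> = card (fib k b r W (\<lambda>_. 0)) * (2^r)^(card W)"
    using W(1) by (simp add: card_PiE)
  also have "\<dots> = card (fib k b r W \<psi>) * (2^r)^(card W)"
    using fib_card_eq[OF W psi] by simp
  finally show ?thesis by simp
qed



lemma tt_lt: "Tt \<in> tornado_tables k c d \<Longrightarrow> Tt i j a < 2^k"
  unfolding tornado_tables_def
  by (cases "i \<le> d") (auto intro: tables_lt)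

lemma derived_ext_props:
  assumes "Tt \<in> tornado_tables k c d"
  shows "length (derived_ext Tt i ys) = length ys + i
       \<and> take (length ys) (derived_ext Tt i ys) = ys
       \<and> (set ys \<subseteq> {..<2^k} \<longrightarrow> set (derived_ext Tt i ys) \<subseteq> {..<2^k})"
proof (induction i)
  case 0
  then show ?case by simp
next
  case (Suc i)
  have "stab (Tt (Suc i)) zs < 2^k" for zs
    unfolding stab_stabn by (rule stabn_lt) (rule tt_lt[OF assms])
  with Suc show ?case by (auto simp: Let_def)
qed

lemma derived_base_props:
  assumes "Tt \<in> tornado_tables k c d" "c \<ge> 1" "x \<in> keys k c"
  shows "length (derived_base Tt c x) = c \<and> set (derived_base Tt c x) \<subseteq> {..<2^k}"
proof -
  have lx: "length x = c" and sx: "set x \<subseteq> {..<2^k}" using assms(3) unfolding keys_def by auto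
  have "x ! (c - 1) \<in> set x" using lx assms(2) by (intro nth_mem) simp
  then have a1: "x ! (c - 1) < 2^k" using sx by auto
  have a2: "stab (Tt 0) (take (c - 1) x) < 2^k"
    unfolding stab_stabn by (rule stabn_lt) (rule tt_lt[OF assms(1)])
  have a3: "set (take (c - 1) x) \<subseteq> {..<2^k}" by (rule subset_trans[OF set_take_subset sx])
  have a4: "Bit_Operations.xor (x ! (c - 1)) (stab (Tt 0) (take (c - 1) x)) < 2^k"
    by (rule xor_lt_pow[OF a1 a2])
  have "length (derived_base Tt c x) = c" unfolding derived_base_def using lx assms(2) by simp
  moreover have "set (derived_base Tt c x) \<subseteq> {..<2^k}" unfolding derived_base_def using a3 a4 by simp
  ultimately show ?thesis by blast
qed

lemma derived_base_inj:
  assumes "Tt \<in> tornado_tables k c d" "c \<ge> 1"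
  shows "inj_on (derived_base Tt c) (keys k c)"
proof
  fix x y assume x: "x \<in> keys k c" and y: "y \<in> keys k c"
    and eq: "derived_base Tt c x = derived_base Tt c y"
  have lx: "length x = c" and ly: "length y = c" using x y unfolding keys_def by auto
  let ?s = "\<lambda>x. stab (Tt 0) (take (c - 1) x)"
  have t: "take (c - 1) x = take (c - 1) y"
    using eq lx ly assms(2) unfolding derived_base_def by auto
  then have "Bit_Operations.xor (x ! (c - 1)) (?s x) = Bit_Operations.xor (y ! (c - 1)) (?s x)"
    using eq unfolding derived_base_def by simp
  then have "Bit_Operations.xor (Bit_Operations.xor (x ! (c - 1)) (?s x)) (?s x) = Bit_Operations.xor (Bit_Operations.xor (y ! (c - 1)) (?s x)) (?s x)"
    by simp
  then have n: "x ! (c - 1) = y ! (c - 1)" by (simp add: xor.assoc)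
  have sc: "Suc (c - 1) = c" using assms(2) by simp
  have "take (Suc (c - 1)) x = take (c - 1) x @ [x ! (c - 1)]"
    by (rule take_Suc_conv_app_nth) (use lx assms(2) in simp)
  then have ex: "x = take (c - 1) x @ [x ! (c - 1)]" unfolding sc using lx by simp
  have "take (Suc (c - 1)) y = take (c - 1) y @ [y ! (c - 1)]"
    by (rule take_Suc_conv_app_nth) (use ly assms(2) in simp)
  then have ey: "y = take (c - 1) y @ [y ! (c - 1)]" unfolding sc using ly by simp
  show "x = y" using ex ey t n by metis
qed

lemma derived_key_props:
  assumes "Tt \<in> tornado_tables k c d" "c \<ge> 1"
  shows "inj_on (derived_key Tt c d) (keys k c)" "derived_key Tt c d ` keys k c \<subseteq> keys k (c + d)"
proof -
  show "inj_on (derived_key Tt c d) (keys k c)"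
  proof
    fix x y assume x: "x \<in> keys k c" and y: "y \<in> keys k c" and eq: "derived_key Tt c d x = derived_key Tt c d y"
    have "take c (derived_key Tt c d x) = derived_base Tt c x"
      using derived_ext_props[OF assms(1), of d "derived_base Tt c x"] derived_base_props[OF assms x]
      unfolding derived_key_def by simp
    moreover have "take c (derived_key Tt c d y) = derived_base Tt c y"
      using derived_ext_props[OF assms(1), of d "derived_base Tt c y"] derived_base_props[OF assms y]
      unfolding derived_key_def by simp
    ultimately have "derived_base Tt c x = derived_base Tt c y" using eq by simp
    then show "x = y" by (rule inj_onD[OF derived_base_inj[OF assms] _ x y])
  qed
  show "derived_key Tt c d ` keys k c \<subseteq> keys k (c + d)"
    using derived_ext_props[OF assms(1)] derived_base_props[OF assms]
    unfolding derived_key_def keys_def[of k "c+d"] by auto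
qed



lemma finite_keys: "finite (keys k b)"
proof -
  have "keys k b = {xs. set xs \<subseteq> {..<2^k} \<and> length xs = b}" unfolding keys_def by auto
  then show ?thesis using finite_lists_length_eq[of "{..<(2::nat)^k}" b] by simp
qed

lemma finite_RQ: "finite Q \<Longrightarrow> finite (RQ r Q)"
proof -
  assume Q: "finite Q"
  have "RQ r Q = {g. \<forall>x. (x \<in> Q \<longrightarrow> g x \<in> {..<(2::nat)^r}) \<and> (x \<notin> Q \<longrightarrow> g x = 0)}"
    unfolding RQ_def by auto
  then show ?thesis using finite_set_of_finite_funs[OF Q, of "{..<(2::nat)^r}" 0] by simp
qed

lemma zero_RQ: "(\<lambda>_. 0) \<in> RQ r Q" unfolding RQ_def by auto

lemma prob_unif: "measure_pmf.prob (pmf_of_set {..<(2::nat)^r}) A = card ({..<(2::nat)^r} \<inter> A) / 2^r"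
  by (subst measure_pmf_of_set) (auto simp: lessThan_empty_iff)

lemma p_sel_ge:
  assumes "finite Q" "\<phi> \<in> RQ r Q"
  shows "card {v\<in>{..<(2::nat)^r}. f x v \<phi>} \<le> 2^r * p_sel r Q f x"
proof -
  have "measure_pmf.prob (pmf_of_set {..<(2::nat)^r}) {v. f x v \<phi>} \<le> p_sel r Q f x"
    unfolding p_sel_def using assms finite_RQ by (intro Max_ge) auto
  moreover have "{..<(2::nat)^r} \<inter> {v. f x v \<phi>} = {v\<in>{..<(2::nat)^r}. f x v \<phi>}" by auto
  ultimately show ?thesis unfolding prob_unif by (simp add: field_simps)
qed

lemma p_sel_nonneg:
  assumes "finite Q"
  shows "0 \<le> p_sel r Q f x"
proof -
  have "0 \<le> measure_pmf.prob (pmf_of_set {..<(2::nat)^r}) {v. f x v (\<lambda>_. 0)}" by simp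
  also have "\<dots> \<le> p_sel r Q f x"
    unfolding p_sel_def using assms finite_RQ zero_RQ by (intro Max_ge) auto
  finally show ?thesis .
qed

lemma p_sel_Q:
  assumes "finite Q" "q \<in> Q" "\<And>q v \<phi>. q \<in> Q \<Longrightarrow> f q v \<phi>"
  shows "p_sel r Q f q = 1"
proof -
  have "(\<lambda>\<phi>. measure_pmf.prob (pmf_of_set {..<(2::nat)^r}) {v. f q v \<phi>}) ` RQ r Q = {1}"
  proof -
    have "measure_pmf.prob (pmf_of_set {..<(2::nat)^r}) {v. f q v \<phi>} = 1" for \<phi>
      using assms(2,3) by (simp add: prob_unif)
    then have "(\<lambda>\<phi>. measure_pmf.prob (pmf_of_set {..<(2::nat)^r}) {v. f q v \<phi>}) ` RQ r Q = (\<lambda>_. 1) ` RQ r Q"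
      by (intro image_cong) auto
    moreover have "RQ r Q \<noteq> {}" using zero_RQ by blast
    ultimately show ?thesis by (simp add: image_constant_conv)
  qed
  then show ?thesis unfolding p_sel_def by simp
qed



definition phiQ :: "nat list set \<Rightarrow> (nat list \<Rightarrow> nat list) \<Rightarrow> (nat list \<Rightarrow> nat) \<Rightarrow> nat list \<Rightarrow> nat" where
  "phiQ Q D \<psi> = (\<lambda>q. if q \<in> Q then \<psi> (D q) else 0)"

lemma countG:
  fixes D :: "nat list \<Rightarrow> nat list"
  assumes fin: "finite Q" "finite Z'"
  shows "inj_on D (Q \<union> Z') \<Longrightarrow> Q \<inter> Z' = {} \<Longrightarrow>
    real (card {\<psi> \<in> PiE (D ` (Q \<union> Z')) (\<lambda>_. {..<(2::nat)^r}). \<forall>z\<in>Z'. f z (\<psi> (D z)) (phiQ Q D \<psi>)})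
      \<le> (2^r)^card Q * (\<Prod>z\<in>Z'. 2^r * p_sel r Q f z)"
  using fin(2)
proof (induction Z' rule: finite_induct)
  case empty
  have "card (PiE (D ` Q) (\<lambda>_. {..<(2::nat)^r})) = (2^r)^card Q"
    using fin(1) empty.prems(1) by (simp add: card_PiE card_image)
  then show ?case by simp
next
  case (insert z0 Z')
  let ?R = "(2::nat)^r"
  let ?A = "D ` (Q \<union> Z')"
  define a where "a = D z0"
  have inj': "inj_on D (Q \<union> Z')" using insert.prems(1) by (rule inj_on_subset) auto
  have disj': "Q \<inter> Z' = {}" using insert.prems(2) by auto
  have z0Q: "z0 \<notin> Q" using insert.prems(2) by auto
  have aA: "a \<notin> ?A"
  proof
    assume "a \<in> ?A"
    then obtain x where x: "x \<in> Q \<union> Z'" "D z0 = D x" unfolding a_def by blast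
    have "x = z0" by (rule inj_onD[OF insert.prems(1) x(2)[symmetric]]) (use x in auto)
    then show False using x(1) z0Q insert.hyps(2) by auto
  qed
  define G' where "G' = {\<psi> \<in> PiE ?A (\<lambda>_. {..<?R}). \<forall>z\<in>Z'. f z (\<psi> (D z)) (phiQ Q D \<psi>)}"
  define G where "G = {\<psi> \<in> PiE (D ` (Q \<union> insert z0 Z')) (\<lambda>_. {..<?R}). \<forall>z\<in>insert z0 Z'. f z (\<psi> (D z)) (phiQ Q D \<psi>)}"
  define S where "S = Sigma G' (\<lambda>g. {y\<in>{..<?R}. f z0 y (phiQ Q D g)})"
  define F where "F = (\<lambda>(g::nat list \<Rightarrow> nat, y::nat). g(a := y))"
  have "finite (PiE ?A (\<lambda>_. {..<?R}))" using insert.hyps(1) fin(1) by (simp add: finite_PiE)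
  then have finG': "finite G'" unfolding G'_def by (rule finite_subset[rotated]) auto
  have "G \<subseteq> F ` S"
  proof
    fix \<psi> assume \<psi>: "\<psi> \<in> G"
    define g where "g = \<psi>(a := undefined)"
    have img: "D ` (Q \<union> insert z0 Z') = insert a ?A" unfolding a_def by auto
    have \<psi>P: "\<psi> \<in> PiE (insert a ?A) (\<lambda>_. {..<?R})" using \<psi> unfolding G_def img by auto
    have gP: "g \<in> PiE ?A (\<lambda>_. {..<?R})"
      using \<psi>P aA unfolding g_def PiE_def extensional_def by auto
    have gz: "g (D z) = \<psi> (D z)" if "z \<in> Q \<union> Z'" for z
      using that aA unfolding g_def by auto
    have gphi: "phiQ Q D g = phiQ Q D \<psi>"
      unfolding phiQ_def using gz by auto
    have "g \<in> G'" unfolding G'_def using gP gz gphi \<psi> unfolding G_def by auto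
    moreover have "f z0 (\<psi> a) (phiQ Q D g)" using \<psi> gphi unfolding G_def a_def by auto
    moreover have "\<psi> a \<in> {..<?R}" using \<psi>P by auto
    ultimately have "(g, \<psi> a) \<in> S" unfolding S_def by auto
    moreover have "\<psi> = F (g, \<psi> a)" unfolding F_def g_def by simp
    ultimately show "\<psi> \<in> F ` S" by (rule rev_image_eqI)
  qed
  then have "card G \<le> card (F ` S)"
    by (intro card_mono finite_imageI) (auto simp: S_def finG')
  also have "\<dots> \<le> card S" by (rule card_image_le) (auto simp: S_def finG' intro!: finite_SigmaI)
  also have "\<dots> = (\<Sum>g\<in>G'. card {y\<in>{..<?R}. f z0 y (phiQ Q D g)})"
    unfolding S_def using finG' by simp
  finally have c1: "real (card G) \<le> (\<Sum>g\<in>G'. real (card {y\<in>{..<?R}. f z0 y (phiQ Q D g)}))"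
    by (simp flip: of_nat_sum)
  have "real (card {y\<in>{..<?R}. f z0 y (phiQ Q D g)}) \<le> 2^r * p_sel r Q f z0" if "g \<in> G'" for g
  proof (rule p_sel_ge[OF fin(1)])
    have "g \<in> PiE ?A (\<lambda>_. {..<?R})" using that unfolding G'_def by auto
    then show "phiQ Q D g \<in> RQ r Q" unfolding RQ_def phiQ_def by auto
  qed
  then have "real (card G) \<le> (\<Sum>g\<in>G'. 2^r * p_sel r Q f z0)"
    using c1 sum_mono order_trans by (smt (verit))
  also have "\<dots> = real (card G') * (2^r * p_sel r Q f z0)" by simp
  also have "\<dots> \<le> (2^r)^card Q * (\<Prod>z\<in>Z'. 2^r * p_sel r Q f z) * (2^r * p_sel r Q f z0)"
    using insert.IH[OF inj' disj'] p_sel_nonneg[OF fin(1)] unfolding G'_def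
    by (intro mult_right_mono) auto
  also have "\<dots> = (2^r)^card Q * (\<Prod>z\<in>insert z0 Z'. 2^r * p_sel r Q f z)"
    using insert.hyps by (simp add: ac_simps)
  finally show ?case unfolding G_def by simp
qed



lemma key:
  fixes D :: "nat list \<Rightarrow> nat list"
  assumes injD: "inj_on D K" and DK: "D ` K \<subseteq> keys k b" and finK: "finite K"
    and QK: "Q \<subseteq> K" and ZK: "Z \<subseteq> K" and ind: "\<not> lin_dependent b (D ` (Z \<union> Q))"
    and fQ: "\<And>q v \<phi>. q \<in> Q \<Longrightarrow> f q v \<phi>"
  shows "real (card {Th\<in>tables k b r. \<forall>z\<in>Z. f z (stab Th (D z)) (restrictQ (\<lambda>x. stab Th (D x)) Q)})
         \<le> real (card (tables k b r)) * (\<Prod>z\<in>Z. p_sel r Q f z)"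
proof -
  let ?R = "(2::nat)^r"
  define Z' where "Z' = Z - Q"
  define W where "W = D ` (Q \<union> Z')"
  have WZ: "W = D ` (Z \<union> Q)" unfolding W_def Z'_def by auto
  have finQ: "finite Q" using finK QK finite_subset by blast
  have finZ': "finite Z'" using finK ZK finite_subset unfolding Z'_def by blast
  have injQZ: "inj_on D (Q \<union> Z')" using injD by (rule inj_on_subset) (use QK ZK Z'_def in auto)
  have disj: "Q \<inter> Z' = {}" unfolding Z'_def by auto
  have finW: "finite W" unfolding W_def using finQ finZ' by simp
  have WK: "W \<subseteq> keys k b" unfolding W_def using DK QK ZK Z'_def by auto
  have indW: "\<not> lin_dependent b W" using ind WZ by simp
  define G where "G = {\<psi> \<in> PiE W (\<lambda>_. {..<?R}). \<forall>z\<in>Z'. f z (\<psi> (D z)) (phiQ Q D \<psi>)}"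
  have "finite (PiE W (\<lambda>_. {..<?R}))" using finW by (simp add: finite_PiE)
  then have finG: "finite G" unfolding G_def by (rule finite_subset[rotated]) auto
  have sub: "{Th\<in>tables k b r. \<forall>z\<in>Z. f z (stab Th (D z)) (restrictQ (\<lambda>x. stab Th (D x)) Q)}
        \<subseteq> (\<Union>\<psi>\<in>G. fib k b r W \<psi>)"
  proof
    fix Th assume Th: "Th \<in> {Th\<in>tables k b r. \<forall>z\<in>Z. f z (stab Th (D z)) (restrictQ (\<lambda>x. stab Th (D x)) Q)}"
    define \<psi> where "\<psi> = restrict (\<lambda>w. stab Th w) W"
    have Thm: "Th \<in> tables k b r" using Th by simp
    have P: "\<psi> \<in> PiE W (\<lambda>_. {..<?R})" unfolding \<psi>_def using stab_lt[OF Thm]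
      by (auto simp only: restrict_PiE_iff lessThan_iff)
    have "phiQ Q D \<psi> = restrictQ (\<lambda>x. stab Th (D x)) Q"
      unfolding phiQ_def restrictQ_def \<psi>_def W_def by auto
    moreover have "\<psi> (D z) = stab Th (D z)" if "z \<in> Z'" for z
      unfolding \<psi>_def W_def using that by auto
    ultimately have "\<psi> \<in> G" unfolding G_def using P Th Z'_def by auto
    moreover have "Th \<in> fib k b r W \<psi>" unfolding fib_def \<psi>_def using Th by auto
    ultimately show "Th \<in> (\<Union>\<psi>\<in>G. fib k b r W \<psi>)" by blast
  qed
  have fibc: "real (card (fib k b r W \<psi>)) = real (card (tables k b r)) / (2^r)^card W" if "\<psi> \<in> G" for \<psi>
  proof -
    have psi_lt: "\<And>w. w \<in> W \<Longrightarrow> \<psi> w < 2^r" using that unfolding G_def by auto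
    have e: "card (fib k b r W \<psi>) * (2^r)^card W = card (tables k b r)"
      by (rule fib_card[OF finW WK indW psi_lt])
    then have "real (card (fib k b r W \<psi>) * (2^r)^card W) = real (card (tables k b r))"
      by (rule arg_cong)
    then show ?thesis by (simp add: field_simps)
  qed
  have "card {Th\<in>tables k b r. \<forall>z\<in>Z. f z (stab Th (D z)) (restrictQ (\<lambda>x. stab Th (D x)) Q)}
        \<le> card (\<Union>\<psi>\<in>G. fib k b r W \<psi>)"
    by (rule card_mono[OF _ sub]) (use finG finite_tables in \<open>auto simp: fib_def\<close>)
  also have "\<dots> \<le> (\<Sum>\<psi>\<in>G. card (fib k b r W \<psi>))" by (rule card_UN_le[OF finG])
  finally have "real (card {Th\<in>tables k b r. \<forall>z\<in>Z. f z (stab Th (D z)) (restrictQ (\<lambda>x. stab Th (D x)) Q)})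
        \<le> (\<Sum>\<psi>\<in>G. real (card (fib k b r W \<psi>)))" by (simp flip: of_nat_sum)
  also have "\<dots> = real (card G) * (real (card (tables k b r)) / (2^r)^card W)"
    using fibc by simp
  also have "\<dots> \<le> ((2^r)^card Q * (\<Prod>z\<in>Z'. 2^r * p_sel r Q f z)) * (real (card (tables k b r)) / (2^r)^card W)"
    using countG[where f=f and r=r, OF finQ finZ' injQZ disj] unfolding G_def W_def
    by (intro mult_right_mono) auto
  also have "\<dots> = real (card (tables k b r)) * (\<Prod>z\<in>Z'. p_sel r Q f z)"
  proof -
    have cW: "card W = card Q + card Z'"
      unfolding W_def using card_image[OF injQZ] card_Un_disjoint[OF finQ finZ' disj] by simp
    have "(\<Prod>z\<in>Z'. 2^r * p_sel r Q f z) = (2^r)^card Z' * (\<Prod>z\<in>Z'. p_sel r Q f z)"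
      by (simp add: prod.distrib)
    then show ?thesis unfolding cW by (simp add: power_add field_simps)
  qed
  also have "(\<Prod>z\<in>Z'. p_sel r Q f z) = (\<Prod>z\<in>Z. p_sel r Q f z)"
  proof -
    have "Z = Z' \<union> (Z \<inter> Q)" "Z' \<inter> (Z \<inter> Q) = {}" unfolding Z'_def by auto
    moreover have "finite (Z \<inter> Q)" using finQ by simp
    moreover have "(\<Prod>z\<in>Z \<inter> Q. p_sel r Q f z) = 1" using p_sel_Q[OF finQ _ fQ] by simp
    ultimately show ?thesis using prod.union_disjoint[OF finZ', of "Z \<inter> Q" "p_sel r Q f"] by simp
  qed
  finally show ?thesis .
qed



lemma sum_pow_card: "finite X \<Longrightarrow> (\<Sum>Z\<in>Pow X. (\<delta>::real)^card Z) = (1+\<delta>)^card X"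
proof -
  assume X: "finite X"
  have "(\<Prod>x\<in>X. \<delta> + 1) = (\<Sum>Z\<in>Pow X. (\<Prod>x\<in>Z. \<delta>) * (\<Prod>x\<in>X - Z. 1))"
    by (rule prod_add[OF X])
  then show ?thesis by (simp add: add.commute)
qed

lemma final_eq:
  fixes \<delta> \<mu> :: real
  assumes "\<delta> > 0" "\<mu> \<ge> 0"
  shows "exp (\<delta> * \<mu>) / (1+\<delta>) powr ((1+\<delta>) * \<mu>) = (exp \<delta> / (1+\<delta>) powr (1+\<delta>)) powr \<mu>"
proof -
  have "(exp \<delta> / (1+\<delta>) powr (1+\<delta>)) powr \<mu> = exp \<delta> powr \<mu> / ((1+\<delta>) powr (1+\<delta>)) powr \<mu>"
    by (rule powr_divide)
  also have "exp \<delta> powr \<mu> = exp (\<delta> * \<mu>)" by (simp add: powr_def)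
  also have "((1+\<delta>) powr (1+\<delta>)) powr \<mu> = (1+\<delta>) powr ((1+\<delta>) * \<mu>)" by (simp add: powr_powr)
  finally show ?thesis by simp
qed

lemma core:
  fixes D :: "nat list \<Rightarrow> nat list" and \<delta> :: real
  assumes injD: "inj_on D (keys k c)" and DK: "D ` keys k c \<subseteq> keys k b"
    and QK: "Q \<subseteq> keys k c" and fQ: "\<And>q v \<phi>. q \<in> Q \<Longrightarrow> f q v \<phi>" and dpos: "\<delta> > 0"
  shows "real (card {Th\<in>tables k b r. (1+\<delta>) * mu_sel k c r Q f \<le> real (card (selected k c Q f (\<lambda>x. stab Th (D x))))
            \<and> lin_independent b (D ` selected k c Q f (\<lambda>x. stab Th (D x)))})
         \<le> (exp \<delta> / (1+\<delta>) powr (1+\<delta>)) powr (mu_sel k c r Q f) * real (card (tables k b r))"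
proof -
  define K where "K = keys k c"
  define \<mu> where "\<mu> = mu_sel k c r Q f"
  define p where "p = p_sel r Q f"
  define TH where "TH = tables k b r"
  define X where "X Th = selected k c Q f (\<lambda>x. stab Th (D x))" for Th
  define E where "E Th = ((1+\<delta>) * \<mu> \<le> real (card (X Th)) \<and> lin_independent b (D ` X Th))" for Th
  define indZ where "indZ Z = (\<not> lin_dependent b (D ` (Z \<union> Q)))" for Z
  define L where "L = (1+\<delta>) powr ((1+\<delta>) * \<mu>)"
  define trm where "trm Th = (\<Sum>Z\<in>Pow K. if Z \<subseteq> X Th \<and> indZ Z then \<delta>^card Z else 0)" for Th
  have finK: "finite K" unfolding K_def by (rule finite_keys)
  have finQ: "finite Q" using finK QK finite_subset K_def by blast
  have finTH: "finite TH" unfolding TH_def by (rule finite_tables)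
  have pnn: "0 \<le> p x" for x unfolding p_def by (rule p_sel_nonneg[OF finQ])
  have mu: "\<mu> = (\<Sum>x\<in>K. p x)" unfolding \<mu>_def mu_sel_def K_def p_def ..
  have munn: "\<mu> \<ge> 0" unfolding mu using pnn by (simp add: sum_nonneg)
  have Lpos: "L > 0" unfolding L_def using dpos by simp
  have XK: "X Th \<subseteq> K" for Th unfolding X_def selected_def K_def by auto
  have QX: "Q \<subseteq> X Th" for Th unfolding X_def selected_def using QK fQ by auto
  have Xz: "Z \<subseteq> X Th \<longleftrightarrow> (\<forall>z\<in>Z. f z (stab Th (D z)) (restrictQ (\<lambda>x. stab Th (D x)) Q))"
    if "Z \<subseteq> K" for Z Th
    using that unfolding X_def selected_def K_def by auto
  have trmnn: "0 \<le> trm Th" for Th unfolding trm_def using dpos by (intro sum_nonneg) auto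
  have step1: "(if E Th then 1 else 0) \<le> trm Th / L" for Th
  proof (cases "E Th")
    case True
    then have indX: "\<not> lin_dependent b (D ` X Th)" and big: "(1+\<delta>) * \<mu> \<le> real (card (X Th))"
      unfolding E_def lin_independent_def by auto
    have "{Z\<in>Pow K. Z \<subseteq> X Th \<and> indZ Z} = Pow (X Th)"
    proof
      show "Pow (X Th) \<subseteq> {Z\<in>Pow K. Z \<subseteq> X Th \<and> indZ Z}"
      proof
        fix Z assume Z: "Z \<in> Pow (X Th)"
        then have "D ` (Z \<union> Q) \<subseteq> D ` X Th" using QX by auto
        then have "indZ Z" unfolding indZ_def using indX dep_mono by blast
        then show "Z \<in> {Z\<in>Pow K. Z \<subseteq> X Th \<and> indZ Z}" using Z XK by auto
      qed
    qed auto
    then have "trm Th = (\<Sum>Z\<in>Pow (X Th). \<delta>^card Z)"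
      unfolding trm_def by (simp add: sum.inter_filter[OF finite_Pow_iff[THEN iffD2, OF finK], symmetric])
    also have "\<dots> = (1+\<delta>)^card (X Th)" using finK XK finite_subset by (intro sum_pow_card) blast
    also have "\<dots> = (1+\<delta>) powr real (card (X Th))" using dpos by (simp add: powr_realpow)
    finally have "trm Th \<ge> L" unfolding L_def using big dpos by (simp add: powr_mono)
    then show ?thesis using True Lpos by simp
  next
    case False
    then show ?thesis using trmnn Lpos by simp
  qed
  have inner: "(\<Sum>Th\<in>TH. if Z \<subseteq> X Th \<and> indZ Z then \<delta>^card Z else 0)
      \<le> \<delta>^card Z * real (card TH) * (\<Prod>z\<in>Z. p z)" if Z: "Z \<in> Pow K" for Z
  proof (cases "indZ Z")
    case True
    have "(\<Sum>Th\<in>TH. if Z \<subseteq> X Th \<and> indZ Z then \<delta>^card Z else 0) = \<delta>^card Z * real (card {Th\<in>TH. Z \<subseteq> X Th})"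
      using True finTH by (simp add: sum.If_cases Int_def)
    also have "{Th\<in>TH. Z \<subseteq> X Th} = {Th\<in>tables k b r. \<forall>z\<in>Z. f z (stab Th (D z)) (restrictQ (\<lambda>x. stab Th (D x)) Q)}"
      unfolding TH_def using Xz Z by auto
    also have "\<delta>^card Z * real (card \<dots>) \<le> \<delta>^card Z * (real (card TH) * (\<Prod>z\<in>Z. p z))"
    proof -
      have ZK: "Z \<subseteq> keys k c" using Z unfolding K_def by simp
      have iZ: "\<not> lin_dependent b (D ` (Z \<union> Q))" using True unfolding indZ_def .
      show ?thesis unfolding TH_def p_def
        using key[where r=r, OF injD DK finite_keys QK ZK iZ fQ] dpos
        by (intro mult_left_mono) auto
    qed
    finally show ?thesis by (simp add: ac_simps)
  next
    case False
    then show ?thesis using dpos pnn by (simp add: prod_nonneg)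
  qed
  have "real (card {Th\<in>TH. E Th}) = (\<Sum>Th\<in>TH. if E Th then 1 else 0)"
    using finTH by (simp add: sum.If_cases Int_def)
  also have "\<dots> \<le> (\<Sum>Th\<in>TH. trm Th / L)" by (rule sum_mono) (rule step1)
  also have "\<dots> = (\<Sum>Z\<in>Pow K. \<Sum>Th\<in>TH. if Z \<subseteq> X Th \<and> indZ Z then \<delta>^card Z else 0) / L"
    unfolding trm_def by (simp add: sum_divide_distrib[symmetric] sum.swap[of _ TH])
  also have "\<dots> \<le> (\<Sum>Z\<in>Pow K. \<delta>^card Z * real (card TH) * (\<Prod>z\<in>Z. p z)) / L"
    using Lpos by (intro divide_right_mono sum_mono inner) auto
  also have "(\<Sum>Z\<in>Pow K. \<delta>^card Z * real (card TH) * (\<Prod>z\<in>Z. p z)) = real (card TH) * (\<Prod>x\<in>K. \<delta> * p x + 1)"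
  proof -
    have "(\<Prod>x\<in>K. \<delta> * p x + 1) = (\<Sum>Z\<in>Pow K. (\<Prod>x\<in>Z. \<delta> * p x) * (\<Prod>x\<in>K - Z. 1))"
      by (rule prod_add[OF finK])
    also have "\<dots> = (\<Sum>Z\<in>Pow K. \<delta>^card Z * (\<Prod>z\<in>Z. p z))"
      by (simp add: prod.distrib)
    finally show ?thesis by (simp add: sum_distrib_left ac_simps)
  qed
  also have "real (card TH) * (\<Prod>x\<in>K. \<delta> * p x + 1) \<le> real (card TH) * exp (\<delta> * \<mu>)"
  proof (intro mult_left_mono)
    have "(\<Prod>x\<in>K. \<delta> * p x + 1) \<le> (\<Prod>x\<in>K. exp (\<delta> * p x))"
      using dpos pnn by (intro prod_mono) (auto simp: add.commute[of _ 1] exp_ge_add_one_self)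
    also have "\<dots> = exp (\<delta> * \<mu>)" unfolding mu by (simp add: exp_sum[OF finK] sum_distrib_left)
    finally show "(\<Prod>x\<in>K. \<delta> * p x + 1) \<le> exp (\<delta> * \<mu>)" .
  qed simp
  finally have "real (card {Th\<in>TH. E Th}) \<le> real (card TH) * exp (\<delta> * \<mu>) / L"
    using Lpos by (simp add: divide_right_mono)
  also have "\<dots> = (exp \<delta> / (1+\<delta>) powr (1+\<delta>)) powr \<mu> * real (card TH)"
    unfolding L_def using final_eq[OF dpos munn] by (metis mult.commute times_divide_eq_right)
  finally show ?thesis unfolding E_def X_def TH_def \<mu>_def .
qed



lemma finite_tt: "finite (tornado_tables k c d)"
proof -
  have "tornado_tables k c d \<subseteq> (\<lambda>g i. if i \<le> d then g i else (\<lambda>_ _. 0)) ` PiE {..d} (\<lambda>i. tables k (c + i - 1) k)"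
  proof
    fix Tt assume Tt: "Tt \<in> tornado_tables k c d"
    have "Tt = (\<lambda>i. if i \<le> d then restrict Tt {..d} i else (\<lambda>_ _. 0))"
      using Tt unfolding tornado_tables_def by (auto simp: fun_eq_iff)
    moreover have "restrict Tt {..d} \<in> PiE {..d} (\<lambda>i. tables k (c + i - 1) k)"
      using Tt unfolding tornado_tables_def by auto
    ultimately show "Tt \<in> (\<lambda>g i. if i \<le> d then g i else (\<lambda>_ _. 0)) ` PiE {..d} (\<lambda>i. tables k (c + i - 1) k)"
      by (rule image_eqI)
  qed
  moreover have "finite (PiE {..d} (\<lambda>i. tables k (c + i - 1) k))"
    by (intro finite_PiE) (auto intro: finite_tables)
  ultimately show ?thesis using finite_subset by blast
qed

lemma zero_tt: "(\<lambda>_ _ _. 0) \<in> tornado_tables k c d"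
  unfolding tornado_tables_def using zero_tables by auto

theorem lemma1p6:
  fixes k c d r :: nat
    and Q :: "nat list set"
    and f :: "nat list \<Rightarrow> nat \<Rightarrow> (nat list \<Rightarrow> nat) \<Rightarrow> bool"
    and \<delta> :: real
  assumes "k \<ge> 8" and "c \<ge> 1" and "d \<ge> 1"
    and "Q \<subseteq> keys k c"
    and "\<And>q v \<phi>. q \<in> Q \<Longrightarrow> f q v \<phi>"
    and "\<delta> > 0"
  shows "measure_pmf.prob (pmf_of_set (tornado_tables k c d \<times> tables k (c + d) r))
           {(Tt, Th). real (card (selected k c Q f (tornado Tt Th c d)))
                         \<ge> (1 + \<delta>) * mu_sel k c r Q f
                      \<and> lin_independent (c + d)
                          (derived_key Tt c d ` selected k c Q f (tornado Tt Th c d))}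
         \<le> (exp \<delta> / (1 + \<delta>) powr (1 + \<delta>)) powr (mu_sel k c r Q f)"
proof -
  define TT where "TT = tornado_tables k c d"
  define TH where "TH = tables k (c + d) r"
  define B where "B = (exp \<delta> / (1 + \<delta>) powr (1 + \<delta>)) powr (mu_sel k c r Q f)"
  define P where "P Tt Th = (real (card (selected k c Q f (tornado Tt Th c d))) \<ge> (1 + \<delta>) * mu_sel k c r Q f
                      \<and> lin_independent (c + d) (derived_key Tt c d ` selected k c Q f (tornado Tt Th c d)))" for Tt Th
  have finTT: "finite TT" unfolding TT_def by (rule finite_tt)
  have finTH: "finite TH" unfolding TH_def by (rule finite_tables)
  have neTT: "TT \<noteq> {}" unfolding TT_def using zero_tt by blast
  have neTH: "TH \<noteq> {}" unfolding TH_def using zero_tables by blast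
  have cTT: "card TT > 0" using finTT neTT by (simp add: card_gt_0_iff)
  have cTH: "card TH > 0" using finTH neTH by (simp add: card_gt_0_iff)
  have each: "real (card {Th\<in>TH. P Tt Th}) \<le> B * real (card TH)" if Tt: "Tt \<in> TT" for Tt
  proof -
    have tor: "tornado Tt Th c d = (\<lambda>x. stab Th (derived_key Tt c d x))" for Th
      by (simp add: fun_eq_iff tornado_def)
    have dk: "inj_on (derived_key Tt c d) (keys k c)" "derived_key Tt c d ` keys k c \<subseteq> keys k (c + d)"
      using derived_key_props[OF Tt[unfolded TT_def] assms(2)] by auto
    show ?thesis
      using core[where r=r, OF dk assms(4) assms(5) assms(6)]
      unfolding P_def tor TH_def B_def by simp
  qed
  have set_eq: "(TT \<times> TH) \<inter> {(Tt, Th). P Tt Th} = Sigma TT (\<lambda>Tt. {Th\<in>TH. P Tt Th})" by auto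
  have "real (card ((TT \<times> TH) \<inter> {(Tt, Th). P Tt Th})) = (\<Sum>Tt\<in>TT. real (card {Th\<in>TH. P Tt Th}))"
    unfolding set_eq using finTT finTH by (simp flip: of_nat_sum)
  also have "\<dots> \<le> (\<Sum>Tt\<in>TT. B * real (card TH))" by (rule sum_mono) (rule each)
  also have "\<dots> = B * (real (card TT) * real (card TH))" by simp
  finally have num: "real (card ((TT \<times> TH) \<inter> {(Tt, Th). P Tt Th})) \<le> B * (real (card TT) * real (card TH))" .
  have "measure_pmf.prob (pmf_of_set (TT \<times> TH)) {(Tt, Th). P Tt Th}
      = real (card ((TT \<times> TH) \<inter> {(Tt, Th). P Tt Th})) / real (card (TT \<times> TH))"
    using finTT finTH neTT neTH by (subst measure_pmf_of_set) auto
  also have "\<dots> \<le> B"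
    using num cTT cTH by (simp add: card_cartesian_product divide_le_eq)
  finally show ?thesis unfolding TT_def TH_def B_def P_def by simp
qed

end
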